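(* Let $G=(V,F,E)$ be a factor tree, i.e. a connected bipartite graph without cycles whose vertices are partitioned into variable nodes $V$ and factor nodes $F$, with every edge joining a variable node to a factor node. For $j\in V$ let $N(j)\subset F$ be its neighbouring factor nodes and $N_j=|N(j)|$; for $\alpha\in F$ let $N(\alpha)\subset V$ be its neighbouring variable nodes. Choose real numbers $c_\alpha>0$ for $\alpha\in F$ and $c_j\ge 0$ for $j\in V$ such that $\sum_{j\in V}c_j+\sum_{\alpha\in F}c_\alpha=1$. For every edge $(j,\alpha)\in E$ with $j\in V$, $\alpha\in F$, removing this edge splits $G$ into two trees; let $G_{1,j\alpha}=(V_{1,j\alpha},F_{1,j\alpha},E_{1,j\alpha})$ be the one containing $j$, and define $$c_{j\alpha}=\sum_{i\in V_{1,j\alpha}}c_i+\sum_{\beta\in F_{1,j\alpha}}c_\beta.$$ Then $c_\alpha>0$, $c_j\ge 0$, $c_{j\alpha}\ge 0$ for all $j\in V$, $\alpha\in F$, and $$c_j-\sum_{\alpha\in N(j)}c_{j\alpha}=1-N_j\quad\text{for all }j\in V,\qquad c_\alpha+\sum_{j\in N(\alpha)}c_{j\alpha}=1\quad\text{for all }\alpha\in F.$$ *)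

theory Defs
  imports Complex_Main
begin

definition fnodes :: "'v set \<Rightarrow> 'f set \<Rightarrow> ('v + 'f) set" where
  "fnodes V F = Inl ` V \<union> Inr ` F"

definition fadj :: "('v \<times> 'f) set \<Rightarrow> ('v + 'f) \<Rightarrow> ('v + 'f) \<Rightarrow> bool" where
  "fadj E x y \<longleftrightarrow> (\<exists>j a. (j, a) \<in> E \<and>
      ((x = Inl j \<and> y = Inr a) \<or> (x = Inr a \<and> y = Inl j)))"

definition fconnected :: "'v set \<Rightarrow> 'f set \<Rightarrow> ('v \<times> 'f) set \<Rightarrow> bool" where
  "fconnected V F E \<longleftrightarrow> (\<forall>x\<in>fnodes V F. \<forall>y\<in>fnodes V F. (fadj E)\<^sup>*\<^sup>* x y)"

definition has_cycle :: "('v \<times> 'f) set \<Rightarrow> bool" where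
  "has_cycle E \<longleftrightarrow> (\<exists>xs. length xs \<ge> 3 \<and> distinct xs \<and>
      (\<forall>i < length xs. fadj E (xs ! i) (xs ! ((i + 1) mod length xs))))"

definition factor_tree :: "'v set \<Rightarrow> 'f set \<Rightarrow> ('v \<times> 'f) set \<Rightarrow> bool" where
  "factor_tree V F E \<longleftrightarrow> finite V \<and> finite F \<and> E \<subseteq> V \<times> F \<and>
      fconnected V F E \<and> \<not> has_cycle E"

definition comp1 :: "('v \<times> 'f) set \<Rightarrow> 'v \<Rightarrow> 'f \<Rightarrow> ('v + 'f) set" where
  "comp1 E j a = {x. (fadj (E - {(j, a)}))\<^sup>*\<^sup>* (Inl j) x}"

definition c_edge :: "'v set \<Rightarrow> 'f set \<Rightarrow> ('v \<times> 'f) set \<Rightarrow> ('v \<Rightarrow> real) \<Rightarrow> ('f \<Rightarrow> real)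
    \<Rightarrow> 'v \<Rightarrow> 'f \<Rightarrow> real" where
  "c_edge V F E cV cF j a =
     (\<Sum>i\<in>{i\<in>V. Inl i \<in> comp1 E j a}. cV i) + (\<Sum>b\<in>{b\<in>F. Inr b \<in> comp1 E j a}. cF b)"

definition nbr_v :: "('v \<times> 'f) set \<Rightarrow> 'v \<Rightarrow> 'f set" where
  "nbr_v E j = {a. (j, a) \<in> E}"

definition nbr_f :: "('v \<times> 'f) set \<Rightarrow> 'f \<Rightarrow> 'v set" where
  "nbr_f E a = {j. (j, a) \<in> E}"

end

theory Submission
  imports Defs "HOL-Library.Transitive_Closure_Table"
begin

definition Del :: "('n \<Rightarrow> 'n \<Rightarrow> bool) \<Rightarrow> 'n \<Rightarrow> 'n \<Rightarrow> 'n \<Rightarrow> 'n \<Rightarrow> bool" where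
  "Del A x y u v \<longleftrightarrow> A u v \<and> \<not> ((u = x \<and> v = y) \<or> (u = y \<and> v = x))"

lemma rtp_sym:
  assumes "\<forall>u v. R u v \<longrightarrow> R v u" and "R\<^sup>*\<^sup>* a b"
  shows "R\<^sup>*\<^sup>* b a"
proof -
  have "symp R" using assms(1) by (auto simp: symp_def)
  then have "symp (R\<^sup>*\<^sup>*)" by (rule symp_rtranclp)
  then show ?thesis using assms(2) by (auto simp: symp_def)
qed

lemma Del_sym: "\<forall>u v. A u v \<longrightarrow> A v u \<Longrightarrow> \<forall>u v. Del A x y u v \<longrightarrow> Del A x y v u"
  unfolding Del_def by blast

lemma star_gen:
  fixes A :: "'n \<Rightarrow> 'n \<Rightarrow> bool" and w :: "'n \<Rightarrow> real"
  assumes symA: "\<forall>u v. A u v \<longrightarrow> A v u"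
    and irr: "\<forall>u. \<not> A u u"
    and closed: "\<forall>u v. A u v \<longrightarrow> u \<in> Nodes \<and> v \<in> Nodes"
    and conn: "\<forall>z\<in>Nodes. A\<^sup>*\<^sup>* x z" and xN: "x \<in> Nodes"
    and noback: "\<forall>u v. A u v \<longrightarrow> \<not> (Del A u v)\<^sup>*\<^sup>* v u"
    and fin: "finite Nodes"
  shows "sum w Nodes = w x + (\<Sum>y\<in>{y. A x y}. sum w {z. (Del A x y)\<^sup>*\<^sup>* y z})"
proof -
  define S where "S y = {z. (Del A x y)\<^sup>*\<^sup>* y z}" for y
  define Q where "Q u v \<longleftrightarrow> A u v \<and> u \<noteq> x \<and> v \<noteq> x" for u v
  have Sub: "S y \<subseteq> Nodes" if "A x y" for y
  proof
    fix z assume "z \<in> S y"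
    then have "(Del A x y)\<^sup>*\<^sup>* y z" by (simp add: S_def)
    then show "z \<in> Nodes"
      by (induction rule: rtranclp_induct) (use closed that in \<open>auto simp: Del_def\<close>)
  qed
  have notx: "z \<noteq> x" if "A x y" "z \<in> S y" for y z
    using noback that by (auto simp: S_def)
  have SQ: "Q\<^sup>*\<^sup>* y z" if "A x y" "z \<in> S y" for y z
  proof -
    have "(Del A x y)\<^sup>*\<^sup>* y z" using that by (simp add: S_def)
    then show ?thesis
    proof (induction rule: rtranclp_induct)
      case base then show ?case by simp
    next
      case (step u v)
      have "u \<noteq> x" using notx[OF that(1)] step(1) by (auto simp: S_def)
      moreover have "v \<noteq> x" using notx[OF that(1)] rtranclp.rtrancl_into_rtrancl[OF step(1,2)] by (auto simp: S_def)
      ultimately have "Q u v" using step(2) by (auto simp: Q_def Del_def)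
      then show ?case using step(3) by simp
    qed
  qed
  have QS: "(Del A x y)\<^sup>*\<^sup>* a b" if "Q\<^sup>*\<^sup>* a b" for y a b
  proof -
    have QD: "Q \<le> Del A x y" by (auto simp: Q_def Del_def)
    from rtranclp_mono[OF QD] that show ?thesis by (rule predicate2D)
  qed
  have Qsym: "\<forall>u v. Q u v \<longrightarrow> Q v u" using symA by (auto simp: Q_def)
  have disj: "S y1 \<inter> S y2 = {}" if "A x y1" "A x y2" "y1 \<noteq> y2" for y1 y2
  proof (rule ccontr)
    assume "S y1 \<inter> S y2 \<noteq> {}"
    then obtain z where z: "z \<in> S y1" "z \<in> S y2" by blast
    have "Q\<^sup>*\<^sup>* y1 z" "Q\<^sup>*\<^sup>* y2 z" using SQ z that by auto
    then have "Q\<^sup>*\<^sup>* z y2" "Q\<^sup>*\<^sup>* y1 z" using rtp_sym[OF Qsym] by blast+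
    then have "Q\<^sup>*\<^sup>* y1 y2" by (meson rtranclp_trans)
    then have "(Del A x y1)\<^sup>*\<^sup>* y1 y2" by (rule QS)
    moreover have "Del A x y1 y2 x" using that symA irr by (auto simp: Del_def)
    ultimately have "(Del A x y1)\<^sup>*\<^sup>* y1 x" by (rule rtranclp.rtrancl_into_rtrancl)
    then show False using noback that(1) by blast
  qed
  have cov: "z = x \<or> (\<exists>y. A x y \<and> z \<in> S y)" if "A\<^sup>*\<^sup>* x z" for z
    using that
  proof (induction rule: rtranclp_induct)
    case base then show ?case by simp
  next
    case (step u v)
    show ?case
    proof (cases "u = x")
      case True
      then show ?thesis using step(2) by (auto simp: S_def)
    next
      case False
      then obtain y where y: "A x y" "u \<in> S y" using step(3) by blast
      show ?thesis
      proof (cases "v = x")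
        case False
        have "Del A x y u v" using False \<open>u \<noteq> x\<close> step(2) by (auto simp: Del_def)
        then have "v \<in> S y" using y(2) by (auto simp: S_def)
        then show ?thesis using y(1) by blast
      qed simp
    qed
  qed
  have NA: "{y. A x y} \<subseteq> Nodes" using closed by auto
  have finN: "finite {y. A x y}" using NA fin finite_subset by blast
  have eq: "Nodes = insert x (\<Union>y\<in>{y. A x y}. S y)"
  proof
    show "Nodes \<subseteq> insert x (\<Union>y\<in>{y. A x y}. S y)" using cov conn by blast
    show "insert x (\<Union>y\<in>{y. A x y}. S y) \<subseteq> Nodes" using xN Sub by blast
  qed
  have "sum w Nodes = w x + sum w (\<Union>y\<in>{y. A x y}. S y)"
  proof -
    have f: "finite (\<Union>y\<in>{y. A x y}. S y)"
    proof -
      have "(\<Union>y\<in>{y. A x y}. S y) \<subseteq> Nodes" using Sub by blast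
      then show ?thesis using fin by (rule finite_subset)
    qed
    have n: "x \<notin> (\<Union>y\<in>{y. A x y}. S y)" using notx by blast
    show ?thesis by (subst eq) (rule sum.insert[OF f n])
  qed
  also have "sum w (\<Union>y\<in>{y. A x y}. S y) = (\<Sum>y\<in>{y. A x y}. sum w (S y))"
  proof (rule sum.UNION_disjoint[OF finN])
    show "\<forall>i\<in>{y. A x y}. finite (S i)" using Sub fin finite_subset by blast
    show "\<forall>i\<in>{y. A x y}. \<forall>j\<in>{y. A x y}. i \<noteq> j \<longrightarrow> S i \<inter> S j = {}"
      using disj by blast
  qed
  finally show ?thesis by (simp add: S_def)
qed

lemma part_gen:
  fixes A :: "'n \<Rightarrow> 'n \<Rightarrow> bool" and w :: "'n \<Rightarrow> real"
  assumes symA: "\<forall>u v. A u v \<longrightarrow> A v u"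
    and closed: "\<forall>u v. A u v \<longrightarrow> u \<in> Nodes \<and> v \<in> Nodes"
    and conn: "\<forall>z\<in>Nodes. A\<^sup>*\<^sup>* x z" and xN: "x \<in> Nodes"
    and noback: "\<forall>u v. A u v \<longrightarrow> \<not> (Del A u v)\<^sup>*\<^sup>* v u"
    and fin: "finite Nodes" and xy: "A x y"
  shows "sum w Nodes = sum w {z. (Del A x y)\<^sup>*\<^sup>* x z} + sum w {z. (Del A x y)\<^sup>*\<^sup>* y z}"
proof -
  define T where "T = {z. (Del A x y)\<^sup>*\<^sup>* x z}"
  define S where "S = {z. (Del A x y)\<^sup>*\<^sup>* y z}"
  have sub: "{z. (Del A x y)\<^sup>*\<^sup>* a z} \<subseteq> Nodes" if "a \<in> Nodes" for a
  proof
    fix z assume "z \<in> {z. (Del A x y)\<^sup>*\<^sup>* a z}"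
    then have "(Del A x y)\<^sup>*\<^sup>* a z" by simp
    then show "z \<in> Nodes"
      by (induction rule: rtranclp_induct) (use closed that in \<open>auto simp: Del_def\<close>)
  qed
  have yN: "y \<in> Nodes" using closed xy by blast
  have cov: "z \<in> T \<union> S" if "A\<^sup>*\<^sup>* x z" for z
    using that
  proof (induction rule: rtranclp_induct)
    case base then show ?case by (simp add: T_def)
  next
    case (step u v)
    show ?case
    proof (cases "(u = x \<and> v = y) \<or> (u = y \<and> v = x)")
      case True then show ?thesis by (auto simp: T_def S_def)
    next
      case False
      then have "Del A x y u v" using step(2) by (simp add: Del_def)
      then show ?thesis using step(3) rtranclp.rtrancl_into_rtrancl[of "Del A x y" x u v]
          rtranclp.rtrancl_into_rtrancl[of "Del A x y" y u v] by (auto simp: T_def S_def)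
    qed
  qed
  have disj: "T \<inter> S = {}"
  proof (rule ccontr)
    assume "T \<inter> S \<noteq> {}"
    then obtain z where "(Del A x y)\<^sup>*\<^sup>* x z" "(Del A x y)\<^sup>*\<^sup>* y z" by (auto simp: T_def S_def)
    then have "(Del A x y)\<^sup>*\<^sup>* y x" using rtp_sym[OF Del_sym[OF symA]] by (meson rtranclp_trans)
    then show False using noback xy by blast
  qed
  have "Nodes = T \<union> S" using cov conn sub xN yN by (auto simp: T_def S_def)
  then have "sum w Nodes = sum w (T \<union> S)" by simp
  also have "\<dots> = sum w T + sum w S"
    apply (rule sum.union_disjoint)
    using finite_subset[OF sub[OF xN] fin] finite_subset[OF sub[OF yN] fin] disj by (auto simp: T_def S_def)
  finally show ?thesis by (simp add: T_def S_def)
qed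

lemma path_nth:
  assumes "rtrancl_path r a xs b"
  shows "(\<forall>i<length xs. r ((a#xs)!i) ((a#xs)!Suc i)) \<and> last (a#xs) = b"
  using assms
proof (induction)
  case (base x) then show ?case by simp
next
  case (step x y ys z)
  have "r ((x#y#ys)!i) ((x#y#ys)!Suc i)" if "i < length (y#ys)" for i
  proof (cases i)
    case 0 then show ?thesis using step by simp
  next
    case (Suc k) then show ?thesis using step that by simp
  qed
  then show ?case using step by simp
qed

lemma fadj_sym: "fadj E u v \<Longrightarrow> fadj E v u"
  unfolding fadj_def by blast

lemma fadj_irr: "\<not> fadj E u u"
  unfolding fadj_def by auto

lemma cycle_from_back:
  assumes xy: "fadj E x y" and p: "(Del (fadj E) x y)\<^sup>*\<^sup>* y x"
  shows "has_cycle E"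
proof -
  obtain xs where "rtrancl_path (Del (fadj E) x y) y xs x"
    using p rtranclp_eq_rtrancl_path by metis
  then obtain xs' where p1: "rtrancl_path (Del (fadj E) x y) y xs' x" and d: "distinct (y # xs')"
    using rtrancl_path_distinct by metis
  have pn: "\<forall>i<length xs'. Del (fadj E) x y ((y#xs')!i) ((y#xs')!Suc i)" and l: "last (y#xs') = x"
    using path_nth[OF p1] by auto
  have ne: "xs' \<noteq> []" using l xy fadj_irr by fastforce
  moreover have "xs' \<noteq> [x]"
  proof
    assume "xs' = [x]"
    then have "Del (fadj E) x y y x" using pn by auto
    then show False by (simp add: Del_def)
  qed
  ultimately have len: "length xs' \<ge> 2"
  proof (rule_tac ccontr)
    assume nx: "xs' \<noteq> [x]" and c: "\<not> 2 \<le> length xs'"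
    have "length xs' \<noteq> 0" using ne by simp
    then have "length xs' = 1" using c by linarith
    then obtain t where t: "xs' = [t]" by (auto simp: length_Suc_conv)
    then show False using l nx by simp
  qed
  define cyc where "cyc = y # xs'"
  have lastc: "cyc ! length xs' = x" using last_conv_nth[of cyc] l by (simp add: cyc_def)
  have "\<forall>i < length cyc. fadj E (cyc ! i) (cyc ! ((i + 1) mod length cyc))"
  proof (intro allI impI)
    fix i assume i: "i < length cyc"
    show "fadj E (cyc ! i) (cyc ! ((i + 1) mod length cyc))"
    proof (cases "i < length xs'")
      case True
      then have "(i+1) mod length cyc = Suc i" by (simp add: cyc_def)
      then show ?thesis using pn True by (simp add: cyc_def Del_def)
    next
      case False
      then have "i = length xs'" using i by (simp add: cyc_def)
      moreover then have "(i+1) mod length cyc = 0" by (simp add: cyc_def)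
      ultimately show ?thesis using lastc xy fadj_sym by (simp add: cyc_def) 
    qed
  qed
  moreover have "length cyc \<ge> 3" using len by (simp add: cyc_def)
  moreover have "distinct cyc" using d by (simp add: cyc_def)
  ultimately show ?thesis unfolding has_cycle_def by blast
qed

lemma Del_eq: "(j, a) \<in> E \<Longrightarrow> fadj (E - {(j, a)}) = Del (fadj E) (Inl j) (Inr a)"
  unfolding fadj_def Del_def by (intro ext) auto

lemma Del_swap: "Del A x y = Del A y x"
  unfolding Del_def by (intro ext) auto

lemma sum_split:
  assumes "finite V" "finite F"
  shows "sum (case_sum cV cF) (C \<inter> fnodes V F) =
    (\<Sum>i\<in>{i\<in>V. Inl i \<in> C}. cV i) + (\<Sum>b\<in>{b\<in>F. Inr b \<in> C}. cF b)"
proof -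
  have eqC: "C \<inter> fnodes V F = Inl ` {i\<in>V. Inl i \<in> C} \<union> Inr ` {b\<in>F. Inr b \<in> C}"
    unfolding fnodes_def by auto
  then have "sum (case_sum cV cF) (C \<inter> fnodes V F) =
     sum (case_sum cV cF) (Inl ` {i\<in>V. Inl i \<in> C}) + sum (case_sum cV cF) (Inr ` {b\<in>F. Inr b \<in> C})"
    unfolding eqC using assms by (intro sum.union_disjoint) auto
  also have "\<dots> = (\<Sum>i\<in>{i\<in>V. Inl i \<in> C}. cV i) + (\<Sum>b\<in>{b\<in>F. Inr b \<in> C}. cF b)"
    by (simp add: sum.reindex)
  finally show ?thesis .
qed

theorem proposition1:
  fixes V :: "'v set" and F :: "'f set" and E :: "('v \<times> 'f) set"
    and cV :: "'v \<Rightarrow> real" and cF :: "'f \<Rightarrow> real"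
  assumes "factor_tree V F E"
    and "\<forall>a\<in>F. cF a > 0"
    and "\<forall>j\<in>V. cV j \<ge> 0"
    and "(\<Sum>j\<in>V. cV j) + (\<Sum>a\<in>F. cF a) = 1"
  shows "(\<forall>a\<in>F. cF a > 0) \<and> (\<forall>j\<in>V. cV j \<ge> 0)
    \<and> (\<forall>(j, a)\<in>E. c_edge V F E cV cF j a \<ge> 0)
    \<and> (\<forall>j\<in>V. cV j - (\<Sum>a\<in>nbr_v E j. c_edge V F E cV cF j a) = 1 - real (card (nbr_v E j)))
    \<and> (\<forall>a\<in>F. cF a + (\<Sum>j\<in>nbr_f E a. c_edge V F E cV cF j a) = 1)"
proof -
  let ?A = "fadj E" and ?N = "fnodes V F" and ?w = "case_sum cV cF"
  have fV: "finite V" and fF: "finite F" and EVF: "E \<subseteq> V \<times> F"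
    and con: "fconnected V F E" and nc: "\<not> has_cycle E"
    using assms(1) unfolding factor_tree_def by auto
  have finN: "finite ?N" using fV fF by (simp add: fnodes_def)
  have symA: "\<forall>u v. ?A u v \<longrightarrow> ?A v u" using fadj_sym by blast
  have irr: "\<forall>u. \<not> ?A u u" using fadj_irr by blast
  have closed: "\<forall>u v. ?A u v \<longrightarrow> u \<in> ?N \<and> v \<in> ?N"
    using EVF unfolding fadj_def fnodes_def by auto
  have conn: "\<forall>z\<in>?N. ?A\<^sup>*\<^sup>* x z" if "x \<in> ?N" for x
    using con that unfolding fconnected_def by blast
  have noback: "\<forall>u v. ?A u v \<longrightarrow> \<not> (Del ?A u v)\<^sup>*\<^sup>* v u"
    using cycle_from_back nc by blast
  have tot: "sum ?w ?N = 1"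
    using sum_split[OF fV fF, where C=UNIV and cV=cV and cF=cF] assms(4) by simp
  have ce: "c_edge V F E cV cF j a = sum ?w ({z. (Del ?A (Inl j) (Inr a))\<^sup>*\<^sup>* (Inl j) z} \<inter> ?N)"
    if "(j, a) \<in> E" for j a
    using sum_split[OF fV fF, where C="{z. (Del ?A (Inl j) (Inr a))\<^sup>*\<^sup>* (Inl j) z}" and cV=cV and cF=cF]
      Del_eq[OF that] unfolding c_edge_def comp1_def by simp
  have subN: "{z. (Del ?A x y)\<^sup>*\<^sup>* y z} \<subseteq> ?N" if "y \<in> ?N" for x y
  proof
    fix z assume "z \<in> {z. (Del ?A x y)\<^sup>*\<^sup>* y z}"
    then have "(Del ?A x y)\<^sup>*\<^sup>* y z" by simp
    then show "z \<in> ?N"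
      by (induction rule: rtranclp_induct) (use closed that in \<open>auto simp: Del_def\<close>)
  qed
  have c1: "\<forall>(j, a)\<in>E. c_edge V F E cV cF j a \<ge> 0"
  proof -
    have "\<forall>a\<in>F. cF a \<ge> 0" using assms(2) by (simp add: less_imp_le)
    then show ?thesis
      unfolding c_edge_def using assms(3) by (auto intro!: add_nonneg_nonneg sum_nonneg)
  qed
  have c2: "cV j - (\<Sum>a\<in>nbr_v E j. c_edge V F E cV cF j a) = 1 - real (card (nbr_v E j))"
    if j: "j \<in> V" for j
  proof -
    have xN: "Inl j \<in> ?N" using j by (simp add: fnodes_def)
    have nb: "{y. ?A (Inl j) y} = Inr ` nbr_v E j"
      unfolding fadj_def nbr_v_def by auto
    have finb: "finite (nbr_v E j)" using EVF fF unfolding nbr_v_def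
      by (metis (no_types, lifting) mem_Collect_eq mem_Sigma_iff subsetD subsetI finite_subset)
    let ?S = "\<lambda>a. sum ?w {z. (Del ?A (Inl j) (Inr a))\<^sup>*\<^sup>* (Inr a) z}"
    have "1 = cV j + (\<Sum>y\<in>Inr ` nbr_v E j. sum ?w {z. (Del ?A (Inl j) y)\<^sup>*\<^sup>* y z})"
      using star_gen[OF symA irr closed conn[OF xN] xN noback finN, of ?w] tot nb by simp
    also have "\<dots> = cV j + (\<Sum>a\<in>nbr_v E j. ?S a)"
      by (simp add: sum.reindex)
    finally have e1: "1 = cV j + (\<Sum>a\<in>nbr_v E j. ?S a)" .
    have e2: "c_edge V F E cV cF j a = 1 - ?S a" if a: "a \<in> nbr_v E j" for a
    proof -
      have ja: "(j, a) \<in> E" using a by (simp add: nbr_v_def)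
      have xy: "?A (Inl j) (Inr a)" using ja by (auto simp: fadj_def)
      have "sum ?w ?N = sum ?w {z. (Del ?A (Inl j) (Inr a))\<^sup>*\<^sup>* (Inl j) z} + ?S a"
        by (rule part_gen[OF symA closed conn[OF xN] xN noback finN xy])
      moreover have "{z. (Del ?A (Inl j) (Inr a))\<^sup>*\<^sup>* (Inl j) z} \<inter> ?N = {z. (Del ?A (Inl j) (Inr a))\<^sup>*\<^sup>* (Inl j) z}"
        using subN[OF xN, of "Inr a"] Del_swap[of ?A "Inl j" "Inr a"] by auto
      ultimately show ?thesis using ce[OF ja] tot by simp
    qed
    have "(\<Sum>a\<in>nbr_v E j. c_edge V F E cV cF j a) = (\<Sum>a\<in>nbr_v E j. 1 - ?S a)"
      using e2 by (rule sum.cong[OF refl])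
    also have "\<dots> = real (card (nbr_v E j)) - (\<Sum>a\<in>nbr_v E j. ?S a)"
      by (simp add: sum_subtractf)
    finally show ?thesis using e1 by simp
  qed
  have c3: "cF a + (\<Sum>j\<in>nbr_f E a. c_edge V F E cV cF j a) = 1" if a: "a \<in> F" for a
  proof -
    have xN: "Inr a \<in> ?N" using a by (simp add: fnodes_def)
    have nb: "{y. ?A (Inr a) y} = Inl ` nbr_f E a"
      unfolding fadj_def nbr_f_def by auto
    have "1 = cF a + (\<Sum>y\<in>Inl ` nbr_f E a. sum ?w {z. (Del ?A (Inr a) y)\<^sup>*\<^sup>* y z})"
      using star_gen[OF symA irr closed conn[OF xN] xN noback finN, of ?w] tot nb by simp
    also have "\<dots> = cF a + (\<Sum>j\<in>nbr_f E a. sum ?w {z. (Del ?A (Inr a) (Inl j))\<^sup>*\<^sup>* (Inl j) z})"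
      by (simp add: sum.reindex)
    also have "(\<Sum>j\<in>nbr_f E a. sum ?w {z. (Del ?A (Inr a) (Inl j))\<^sup>*\<^sup>* (Inl j) z})
        = (\<Sum>j\<in>nbr_f E a. c_edge V F E cV cF j a)"
    proof (rule sum.cong[OF refl])
      fix j assume "j \<in> nbr_f E a"
      then have ja: "(j, a) \<in> E" by (simp add: nbr_f_def)
      then have jN: "Inl j \<in> ?N" using EVF by (auto simp: fnodes_def)
      show "sum ?w {z. (Del ?A (Inr a) (Inl j))\<^sup>*\<^sup>* (Inl j) z} = c_edge V F E cV cF j a"
        using ce[OF ja] subN[OF jN, of "Inr a"] Del_swap[of ?A "Inl j" "Inr a"]
        by (simp add: Int_absorb2)
    qed
    finally show ?thesis by simp
  qed
  show ?thesis using assms(2,3) c1 c2 c3 by blast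
qed

end
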